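(* Let $C\subseteq\mathbb{F}_q^n$ be a constant weight linear code. Then the map from the set of subcodes of $C$ to $2^{\{1,\dots,n\}}$ sending a subcode $C'$ to $\mathrm{Supp}(C')$ is injective.
   Context: A subcode is a linear subspace of $C$. For a subcode $D$, $\mathrm{Supp}(D)=\{x\in\{1,\dots,n\}: \exists d\in D,\ d_x\neq0\}$. A constant weight code is a linear code all of whose non-zero codewords have the same number of non-zero coordinates. *)

theory Defs
  imports Main
begin

text \<open>Vectors of F_q^n are functions from a finite index type 'n (with CARD('n) = n)
  to a finite field 'a.\<close>

definition linear_subspace :: "('n \<Rightarrow> 'a::field) set \<Rightarrow> bool" where
  "linear_subspace D \<longleftrightarrow> (\<lambda>_. 0) \<in> D \<and>
     (\<forall>x\<in>D. \<forall>y\<in>D. (\<lambda>i. x i + y i) \<in> D) \<and> (\<forall>c. \<forall>x\<in>D. (\<lambda>i. c * x i) \<in> D)"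

definition subcode :: "('n \<Rightarrow> 'a::field) set \<Rightarrow> ('n \<Rightarrow> 'a) set \<Rightarrow> bool" where
  "subcode D C \<longleftrightarrow> linear_subspace D \<and> D \<subseteq> C"

definition Supp :: "('n \<Rightarrow> 'a::zero) set \<Rightarrow> 'n set" where
  "Supp D = {x. \<exists>d\<in>D. d x \<noteq> 0}"

definition weight :: "('n \<Rightarrow> 'a::zero) \<Rightarrow> nat" where
  "weight c = card {i. c i \<noteq> 0}"

definition constant_weight :: "('n \<Rightarrow> 'a::zero) set \<Rightarrow> bool" where
  "constant_weight C \<longleftrightarrow> (\<forall>c\<in>C. \<forall>d\<in>C. c \<noteq> (\<lambda>_. 0) \<longrightarrow> d \<noteq> (\<lambda>_. 0) \<longrightarrow> weight c = weight d)"

end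

theory Submission
  imports Defs
begin

lemma ls_diff:
  assumes "linear_subspace D" "x \<in> D" "y \<in> D"
  shows "(\<lambda>j. x j - y j) \<in> D"
proof -
  have h: "\<And>u v. u\<in>D \<Longrightarrow> v\<in>D \<Longrightarrow> (\<lambda>i. u i + v i) \<in> D"
    using assms(1) unfolding linear_subspace_def by blast
  have "(\<lambda>j. (-1) * y j) \<in> D" using assms unfolding linear_subspace_def by blast
  from h[OF assms(2) this] show ?thesis by simp
qed

lemma fiber_card:
  fixes D :: "('n::finite \<Rightarrow> 'a::{finite,field}) set"
  assumes "linear_subspace D" "d0 \<in> D"
  shows "card {d\<in>D. d i = d0 i} = card {d\<in>D. d i = 0}"
proof -
  have fin: "finite X" for X :: "('n \<Rightarrow> 'a) set" by simp
  have "bij_betw (\<lambda>x j. x j - d0 j) {d\<in>D. d i = d0 i} {d\<in>D. d i = 0}"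
  proof (rule bij_betw_byWitness[where f'="\<lambda>x j. x j + d0 j"])
    show "\<forall>a\<in>{d \<in> D. d i = d0 i}. (\<lambda>j. (\<lambda>j. a j - d0 j) j + d0 j) = a" by simp
    show "\<forall>a'\<in>{d \<in> D. d i = 0}. (\<lambda>j. (\<lambda>j. a' j + d0 j) j - d0 j) = a'" by simp
    show "(\<lambda>x j. x j - d0 j) ` {d \<in> D. d i = d0 i} \<subseteq> {d \<in> D. d i = 0}"
      using ls_diff[OF assms(1) _ assms(2)] by auto
    show "(\<lambda>x j. x j + d0 j) ` {d \<in> D. d i = 0} \<subseteq> {d \<in> D. d i = d0 i}"
      using assms unfolding linear_subspace_def by auto
  qed
  then show ?thesis by (rule bij_betw_same_card)
qed

lemma count_coord:
  fixes D :: "('n::finite \<Rightarrow> 'a::{finite,field}) set"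
  assumes "linear_subspace D" "i \<in> Supp D"
  shows "card D = card (UNIV::'a set) * card {d\<in>D. d i = 0}"
proof -
  obtain e where e: "e \<in> D" "e i \<noteq> 0" using assms(2) unfolding Supp_def by auto
  have fib: "card {d\<in>D. d i = c} = card {d\<in>D. d i = 0}" for c
  proof -
    let ?d0 = "\<lambda>j. (c / e i) * e j"
    have "?d0 \<in> D" using assms(1) e(1) unfolding linear_subspace_def by blast
    moreover have "?d0 i = c" using e(2) by simp
    ultimately show ?thesis using fiber_card[OF assms(1), of ?d0 i] by simp
  qed
  have DU: "D = (\<Union>c\<in>UNIV. {d\<in>D. d i = c})" by auto
  have "card (\<Union>c\<in>UNIV. {d\<in>D. d i = c}) = (\<Sum>c\<in>UNIV. card {d\<in>D. d i = c})"
    by (rule card_UN_disjoint) auto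
  then have "card D = (\<Sum>c\<in>UNIV. card {d\<in>D. d i = c})" using DU by simp
  also have "\<dots> = (\<Sum>c\<in>(UNIV::'a set). card {d\<in>D. d i = 0})" by (rule sum.cong[OF refl fib])
  also have "\<dots> = card (UNIV::'a set) * card {d\<in>D. d i = 0}" by simp
  finally show ?thesis .
qed

lemma nonzero_coord:
  fixes D :: "('n::finite \<Rightarrow> 'a::{finite,field}) set"
  assumes "linear_subspace D" "i \<in> Supp D"
  shows "card (UNIV::'a set) * card {d\<in>D. d i \<noteq> 0} = (card (UNIV::'a set) - 1) * card D"
proof -
  have "card D = card {d\<in>D. d i \<noteq> 0} + card {d\<in>D. d i = 0}"
    by (subst card_Un_disjoint[symmetric]) (auto intro: arg_cong[where f=card])
  moreover have "card D = card (UNIV::'a set) * card {d\<in>D. d i = 0}" using count_coord[OF assms] .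
  moreover have "0 < card (UNIV::'a set)" by (simp add: card_gt_0_iff)
  moreover have q1: "1 \<le> card (UNIV::'a set)" using calculation by linarith
  moreover have "card {d\<in>D. d i \<noteq> 0} \<le> card (UNIV::'a set) * card {d\<in>D. d i \<noteq> 0}"
    using q1 by simp
  ultimately show ?thesis by (simp add: diff_mult_distrib algebra_simps)
qed

lemma double_count:
  fixes D :: "('n::finite \<Rightarrow> 'a::{finite,field}) set"
  assumes "linear_subspace D"
  shows "card (UNIV::'a set) * (\<Sum>d\<in>D. weight d) = card (Supp D) * (card (UNIV::'a set) - 1) * card D"
proof -
  have "(\<Sum>d\<in>D. weight d) = (\<Sum>d\<in>D. \<Sum>i\<in>UNIV. if d i \<noteq> 0 then 1 else 0)"
    unfolding weight_def by (simp add: sum.If_cases Int_def)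
  also have "\<dots> = (\<Sum>i\<in>UNIV. \<Sum>d\<in>D. if d i \<noteq> 0 then 1 else 0)" by (rule sum.swap)
  also have "\<dots> = (\<Sum>i\<in>UNIV. card {d\<in>D. d i \<noteq> 0})"
    by (simp add: sum.If_cases Int_def)
  also have "\<dots> = (\<Sum>i\<in>Supp D. card {d\<in>D. d i \<noteq> 0})"
    by (rule sum.mono_neutral_right) (auto simp: Supp_def)
  finally have "card (UNIV::'a set) * (\<Sum>d\<in>D. weight d) = (\<Sum>i\<in>Supp D. card (UNIV::'a set) * card {d\<in>D. d i \<noteq> 0})"
    by (simp add: sum_distrib_left)
  also have "\<dots> = (\<Sum>i\<in>Supp D. (card (UNIV::'a set) - 1) * card D)"
    using nonzero_coord[OF assms] by simp
  finally show ?thesis by simp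
qed

lemma arith_key:
  fixes A B x y :: nat
  assumes "A * (x - 1) = B * x" "A * (y - 1) = B * y" "1 \<le> x" "x < y"
  shows "A = 0"
proof -
  have a1: "int (A * (x - 1)) = int A * (int x - 1)" using assms(3) by (simp add: of_nat_diff)
  have a2: "int (A * (y - 1)) = int A * (int y - 1)" using assms(3,4) by (simp add: of_nat_diff)
  have 1: "int A * (int x - 1) = int B * int x" using a1 unfolding assms(1) of_nat_mult by simp
  have 2: "int A * (int y - 1) = int B * int y" using a2 unfolding assms(2) of_nat_mult by simp
  have "(int A - int B) * (int y - int x) = 0" using 1 2 by (simp add: algebra_simps)
  then have "int A = int B" using assms(4) by simp
  then have AB: "A = B" by simp
  have "int A * (int x - 1) = int A * int x" using 1 unfolding AB .
  then have "int A = 0" by (simp add: algebra_simps)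
  then show ?thesis by simp
qed

lemma sum_weight:
  fixes X C :: "('n::finite \<Rightarrow> 'a::{finite,field}) set"
  assumes "linear_subspace X" "X \<subseteq> C" "constant_weight C" "e \<in> C" "e \<noteq> (\<lambda>_. 0)"
  shows "(\<Sum>d\<in>X. weight d) = (card X - 1) * weight e"
proof -
  have z: "(\<lambda>_. 0) \<in> X" using assms(1) unfolding linear_subspace_def by blast
  have w0: "weight (\<lambda>_. 0::'a) = 0" by (simp add: weight_def)
  have "(\<Sum>d\<in>X. weight d) = (\<Sum>d\<in>X - {\<lambda>_. 0}. weight d)"
    proof (rule sum.mono_neutral_right)
    show "\<forall>i\<in>X - (X - {\<lambda>_. 0}). weight i = 0" using w0 by blast
  qed simp_all
  also have "\<dots> = (\<Sum>d\<in>X - {\<lambda>_. 0}. weight e)"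
  proof (rule sum.cong[OF refl])
    fix x assume x: "x \<in> X - {\<lambda>_. 0}"
    then have "x \<in> C" "x \<noteq> (\<lambda>_. 0)" using assms(2) by auto
    then show "weight x = weight e" using assms(3-5) unfolding constant_weight_def by blast
  qed
  also have "\<dots> = (card X - 1) * weight e" using z by simp
  finally show ?thesis .
qed

lemma same_supp:
  fixes D E C :: "('n::finite \<Rightarrow> 'a::{finite,field}) set"
  assumes "linear_subspace D" "linear_subspace E" "D \<subseteq> E" "E \<subseteq> C"
    "constant_weight C" "Supp D = Supp E"
  shows "D = E"
proof (rule ccontr)
  assume "D \<noteq> E"
  then obtain e where e: "e \<in> E" "e \<notin> D" using assms(3) by blast
  have z: "(\<lambda>_. 0) \<in> D" using assms(1) unfolding linear_subspace_def by blast
  then have ne: "e \<noteq> (\<lambda>_. 0)" using e by auto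
  have eC: "e \<in> C" using e assms by auto
  let ?q = "card (UNIV::'a set)"
  let ?s = "card (Supp E)"
  have hD: "?q * weight e * (card D - 1) = ?s * (?q - 1) * card D"
    using double_count[OF assms(1)] sum_weight[OF assms(1) _ assms(5) eC ne] assms(3,4,6)
    by (simp add: algebra_simps)
  have hE: "?q * weight e * (card E - 1) = ?s * (?q - 1) * card E"
    using double_count[OF assms(2)] sum_weight[OF assms(2) assms(4) assms(5) eC ne]
    by (simp add: algebra_simps)
  have lt: "card D < card E" using assms(3) \<open>D \<noteq> E\<close> by (intro psubset_card_mono) auto
  have "card D \<noteq> 0" using z by (auto simp: card_eq_0_iff)
  then have ge: "1 \<le> card D" by linarith
  have "?q * weight e = 0" by (rule arith_key[OF hD hE ge lt])
  moreover have "?q > 0" by (simp add: card_gt_0_iff)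
  ultimately have "weight e = 0" by simp
  then have "{i. e i \<noteq> 0} = {}" unfolding weight_def by simp
  then have "e = (\<lambda>_. 0)" by auto
  then show False using ne by simp
qed

theorem proposition2:
  fixes C :: "('n::finite \<Rightarrow> 'a::{finite,field}) set"
  assumes "linear_subspace C"
    and "constant_weight C"
  shows "inj_on Supp {D. subcode D C}"
proof (rule inj_onI)
  fix D1 D2 assume d1: "D1 \<in> {D. subcode D C}" and d2: "D2 \<in> {D. subcode D C}"
    and eq: "Supp D1 = Supp D2"
  have l1: "linear_subspace D1" "D1 \<subseteq> C" and l2: "linear_subspace D2" "D2 \<subseteq> C"
    using d1 d2 unfolding subcode_def by auto
  define E where "E = {f. \<exists>x\<in>D1. \<exists>y\<in>D2. f = (\<lambda>i. x i + y i)}"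
  have z1: "(\<lambda>_. 0) \<in> D1" and z2: "(\<lambda>_. 0) \<in> D2"
    using l1 l2 unfolding linear_subspace_def by blast+
  have sub1: "D1 \<subseteq> E" unfolding E_def using z2 by force
  have sub2: "D2 \<subseteq> E" unfolding E_def using z1 by force
  have add1: "\<And>u v. u\<in>D1 \<Longrightarrow> v\<in>D1 \<Longrightarrow> (\<lambda>i. u i + v i) \<in> D1"
   and sc1: "\<And>c u. u\<in>D1 \<Longrightarrow> (\<lambda>i. c * u i) \<in> D1"
    using l1 unfolding linear_subspace_def by blast+
  have add2: "\<And>u v. u\<in>D2 \<Longrightarrow> v\<in>D2 \<Longrightarrow> (\<lambda>i. u i + v i) \<in> D2"
   and sc2: "\<And>c u. u\<in>D2 \<Longrightarrow> (\<lambda>i. c * u i) \<in> D2"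
    using l2 unfolding linear_subspace_def by blast+
  have addC: "\<And>u v. u\<in>C \<Longrightarrow> v\<in>C \<Longrightarrow> (\<lambda>i. u i + v i) \<in> C"
    using assms(1) unfolding linear_subspace_def by blast
  have lE: "linear_subspace E"
    unfolding linear_subspace_def
  proof (intro conjI ballI allI)
    show "(\<lambda>_. 0) \<in> E" using sub1 z1 by blast
  next
    fix a b assume "a \<in> E" "b \<in> E"
    then obtain x1 y1 x2 y2 where "x1\<in>D1" "y1\<in>D2" "x2\<in>D1" "y2\<in>D2"
      "a = (\<lambda>i. x1 i + y1 i)" "b = (\<lambda>i. x2 i + y2 i)" unfolding E_def by blast
    moreover have "(\<lambda>i. a i + b i) = (\<lambda>i. (\<lambda>i. x1 i + x2 i) i + (\<lambda>i. y1 i + y2 i) i)"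
      using calculation by (simp add: algebra_simps)
    ultimately show "(\<lambda>i. a i + b i) \<in> E" unfolding E_def mem_Collect_eq
      apply -
      apply (rule bexI[where x="\<lambda>i. x1 i + x2 i"])
       apply (rule bexI[where x="\<lambda>i. y1 i + y2 i"])
      using add1 add2 by simp_all
  next
    fix c a assume "a \<in> E"
    then obtain x1 y1 where "x1\<in>D1" "y1\<in>D2" "a = (\<lambda>i. x1 i + y1 i)" unfolding E_def by blast
    moreover have "(\<lambda>i. c * a i) = (\<lambda>i. (\<lambda>i. c * x1 i) i + (\<lambda>i. c * y1 i) i)"
      using calculation by (simp add: algebra_simps)
    ultimately show "(\<lambda>i. c * a i) \<in> E" unfolding E_def mem_Collect_eq
      apply -
      apply (rule bexI[where x="\<lambda>i. c * x1 i"])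
       apply (rule bexI[where x="\<lambda>i. c * y1 i"])
      using sc1 sc2 by simp_all
  qed
  have EC: "E \<subseteq> C"
  proof
    fix f assume "f \<in> E"
    then obtain x y where "x\<in>D1" "y\<in>D2" "f = (\<lambda>i. x i + y i)" unfolding E_def by blast
    then show "f \<in> C" using l1(2) l2(2) addC by auto
  qed
  have "Supp E \<subseteq> Supp D1 \<union> Supp D2"
  proof
    fix j assume "j \<in> Supp E"
    then obtain f where "f \<in> E" "f j \<noteq> 0" unfolding Supp_def by blast
    then obtain x y where "x\<in>D1" "y\<in>D2" "f = (\<lambda>i. x i + y i)" unfolding E_def by blast
    then have "x j \<noteq> 0 \<or> y j \<noteq> 0" using \<open>f j \<noteq> 0\<close> by auto
    then show "j \<in> Supp D1 \<union> Supp D2" unfolding Supp_def using \<open>x\<in>D1\<close> \<open>y\<in>D2\<close> by blast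
  qed
  moreover have "Supp D1 \<subseteq> Supp E" "Supp D2 \<subseteq> Supp E"
    using sub1 sub2 unfolding Supp_def by blast+
  ultimately have s1: "Supp D1 = Supp E" and s2: "Supp D2 = Supp E" using eq by blast+
  have "D1 = E" by (rule same_supp[OF l1(1) lE sub1 EC assms(2) s1])
  moreover have "D2 = E" by (rule same_supp[OF l2(1) lE sub2 EC assms(2) s2])
  ultimately show "D1 = D2" by simp
qed

end
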